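(* Let $W\colon \mathrm{GL}^+(2)\to\mathbb{R}$ be a rank-one convex isotropic energy function with an additive volumetric-isochoric split, i.e. there are functions $h,f\colon(0,\infty)\to\mathbb{R}$ with $h(t)=h(1/t)$ for all $t>0$ such that \[ W(F)=h\!\left(\frac{\lambda_1}{\lambda_2}\right)+f(\lambda_1\lambda_2)\qquad\text{for all }F\in\mathrm{GL}^+(2), \] where $\lambda_1,\lambda_2>0$ are the singular values of $F$. Then $h$ is convex on $(0,\infty)$ or $f$ is convex on $(0,\infty)$.
   Context: $\mathrm{GL}^+(2)=\{F\in\mathbb{R}^{2\times2}:\det F>0\}$. $W$ is isotropic (and objective) if $W(R_1FR_2)=W(F)$ for all $R_1\in\mathrm{SO}(2)$, $R_2\in\mathrm{O}(2)$. A function $W\colon\mathrm{GL}^+(2)\to\mathbb{R}$ is called rank-one convex if its extension $\widehat W\colon\mathbb{R}^{2\times2}\to\mathbb{R}\cup\{+\infty\}$, $\widehat W=W$ on $\mathrm{GL}^+(2)$ and $\widehat W=+\infty$ otherwise, satisfies $\widehat W(tF_1+(1-t)F_2)\le t\widehat W(F_1)+(1-t)\widehat W(F_2)$ for all $F_1,F_2$ with $\operatorname{rank}(F_1-F_2)=1$ and $t\in(0,1)$. *)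

theory Defs
  imports "HOL-Analysis.Analysis" "HOL-Library.Extended_Real"
begin

type_synonym mat2 = "real^2^2"

definition W_ext :: "(mat2 \<Rightarrow> real) \<Rightarrow> mat2 \<Rightarrow> ereal" where
  "W_ext W F = (if det F > 0 then ereal (W F) else \<infinity>)"

definition rank_one_convex_GL2 :: "(mat2 \<Rightarrow> real) \<Rightarrow> bool" where
  "rank_one_convex_GL2 W \<longleftrightarrow>
     (\<forall>F1 F2 :: mat2. \<forall>t::real. rank (F1 - F2) = 1 \<and> 0 < t \<and> t < 1 \<longrightarrow>
        W_ext W (t *\<^sub>R F1 + (1 - t) *\<^sub>R F2)
          \<le> ereal t * W_ext W F1 + ereal (1 - t) * W_ext W F2)"

definition isotropic_GL2 :: "(mat2 \<Rightarrow> real) \<Rightarrow> bool" where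
  "isotropic_GL2 W \<longleftrightarrow>
     (\<forall>F R1 R2 :: mat2. det F > 0 \<and> orthogonal_matrix R1 \<and> det R1 = 1 \<and> orthogonal_matrix R2
        \<longrightarrow> W (R1 ** F ** R2) = W F)"

text \<open>l1, l2 are the singular values of F (counted with multiplicity): they are nonnegative and
  their squares are the eigenvalues (with multiplicity) of F^T F, i.e. the characteristic
  polynomial of F^T F is (x - l1^2)(x - l2^2).\<close>
definition singular_values2 :: "mat2 \<Rightarrow> real \<Rightarrow> real \<Rightarrow> bool" where
  "singular_values2 F l1 l2 \<longleftrightarrow> 0 \<le> l1 \<and> 0 \<le> l2 \<and>
     (\<forall>x::real. det (x *\<^sub>R mat 1 - transpose F ** F) = (x - l1\<^sup>2) * (x - l2\<^sup>2))"

end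

theory Submission
  imports Defs
begin

definition mk :: "real \<Rightarrow> real \<Rightarrow> real \<Rightarrow> real \<Rightarrow> real^2^2" where
  "mk a b c d = (\<chi> i j. if i = 1 then (if j = 1 then a else b) else (if j = 1 then c else d))"
lemma mk_nth[simp]: "mk a b c d $ 1 $ 1 = a" "mk a b c d $ 1 $ 2 = b" "mk a b c d $ 2 $ 1 = c" "mk a b c d $ 2 $ 2 = d"
  by (simp_all add: mk_def)
lemma mat2_eq: "(A::real^2^2) = B \<longleftrightarrow> A$1$1 = B$1$1 \<and> A$1$2 = B$1$2 \<and> A$2$1 = B$2$1 \<and> A$2$2 = B$2$2"
  by (auto simp: vec_eq_iff forall_2)
lemma det_mk: "det (mk a b c d) = a*d - b*c" by (simp add: det_2)
lemma char_mk: "det (x *\<^sub>R mat 1 - transpose (mk a b c d) ** mk a b c d) = x^2 - x*(a^2+b^2+c^2+d^2) + (a*d-b*c)^2"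
  by (simp add: det_2 matrix_matrix_mult_def sum_2 transpose_def mat_def power2_eq_square algebra_simps)
lemma sv_mk: assumes "l1 \<ge> 0" "l2 \<ge> 0" "l1^2 + l2^2 = a^2+b^2+c^2+d^2" "l1*l2 = a*d-b*c"
  shows "singular_values2 (mk a b c d) l1 l2"
proof -
  have "x^2 - x*(a^2+b^2+c^2+d^2) + (a*d-b*c)^2 = (x - l1\<^sup>2) * (x - l2\<^sup>2)" for x
  proof -
    have "(x - l1\<^sup>2) * (x - l2\<^sup>2) = x^2 - x*(l1^2+l2^2) + (l1*l2)^2"
      by (simp add: power2_eq_square algebra_simps)
    then show ?thesis using assms by simp
  qed
  thus ?thesis using assms unfolding singular_values2_def char_mk by auto
qed
lemma rank1_mk: assumes "mk a b c d \<noteq> 0" "a*d - b*c = 0" shows "rank (mk a b c d) = 1"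
proof -
  have "rank (mk a b c d) < 2" using det_eq_0_rank[of "mk a b c d"] assms by (simp add: det_mk)
  moreover have "rank (mk a b c d) \<noteq> 0" using assms rank_eq_0 by blast
  ultimately show ?thesis by linarith
qed
lemma combo_mk: "t *\<^sub>R mk a b c d + s *\<^sub>R mk a' b' c' d' = mk (t*a+s*a') (t*b+s*b') (t*c+s*c') (t*d+s*d')"
  by (simp add: mat2_eq)
lemma diff_mk: "mk a b c d - mk a' b' c' d' = mk (a-a') (b-b') (c-c') (d-d')"
  by (simp add: mat2_eq)

lemma bad_triple:
  fixes \<phi> :: "real \<Rightarrow> real"
  assumes cont: "continuous_on {0<..} \<phi>" and nc: "\<not> convex_on {0<..} \<phi>"
  shows "\<exists>m P Q. 0 < P \<and> P < m \<and> m < Q \<and>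
     (\<forall>p q. P \<le> p \<longrightarrow> p < m \<longrightarrow> m < q \<longrightarrow> q \<le> Q \<longrightarrow>
        (q - m) * \<phi> p + (m - p) * \<phi> q < \<phi> m * (q - p))"
proof -
  obtain t x y where t: "0 < t" "t < 1" and xy: "0 < x" "x < y"
    and bad: "\<phi> ((1 - t) * x + t * y) > (1 - t) * \<phi> x + t * \<phi> y"
  proof -
    have "convex ({0<..}::real set)" by simp
    then show ?thesis using nc that convex_on_linorderI[of "{0<..}" \<phi>]
      by (smt (verit, best) greaterThan_iff real_scaleR_def)
  qed
  define sl where "sl = (\<phi> y - \<phi> x) / (y - x)"
  define L where "L u = \<phi> x + (u - x) * sl" for u
  define g where "g u = \<phi> u - L u" for u
  have Laff: "(q - m) * L p + (m - p) * L q = L m * (q - p)" for p q m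
    unfolding L_def by (simp add: algebra_simps)
  have contg: "continuous_on {x..y} g"
  proof -
    have "continuous_on {x..y} \<phi>" using xy by (intro continuous_on_subset[OF cont]) auto
    then show ?thesis unfolding g_def L_def by (intro continuous_intros)
  qed
  obtain u0 where u0: "u0 \<in> {x..y}" "\<And>v. v \<in> {x..y} \<Longrightarrow> g v \<le> g u0"
    using continuous_attains_sup[OF compact_Icc _ contg] xy by auto
  define Z where "Z = {v \<in> {x..y}. g v = g u0}"
  have Zc: "closed Z" unfolding Z_def by (rule continuous_closed_preimage_constant[OF contg]) simp
  have Zne: "Z \<noteq> {}" using u0 unfolding Z_def by auto
  have Zb: "bdd_below Z" unfolding Z_def by (rule bdd_belowI[of _ x]) auto
  define m where "m = Inf Z"
  have mZ: "m \<in> Z" unfolding m_def using closed_contains_Inf[OF Zne Zb Zc] .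
  have gx: "g x = 0" and gy: "g y = 0" unfolding g_def L_def sl_def using xy by auto
  define z0 where "z0 = (1 - t) * x + t * y"
  have z0: "z0 \<in> {x..y}"
  proof -
    have e1: "z0 - x = t*(y-x)" unfolding z0_def by (simp add: algebra_simps)
    have e2: "y - z0 = (1-t)*(y-x)" unfolding z0_def by (simp add: algebra_simps)
    have a1: "t*(y-x) \<ge> 0" using t xy by simp
    have a2: "(1-t)*(y-x) \<ge> 0" using t xy by simp
    have "x \<le> z0" using e1 a1 by linarith
    moreover have "z0 \<le> y" using e2 a2 by linarith
    ultimately show ?thesis by simp
  qed
  have "L z0 = (1 - t) * \<phi> x + t * \<phi> y" unfolding L_def z0_def sl_def using xy
    by (simp add: field_simps)
  then have "g z0 > 0" unfolding g_def using bad z0_def by simp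
  then have Mpos: "g u0 > 0" using u0 z0 by force
  have m1: "x < m" using mZ gx Mpos unfolding Z_def by (cases "m = x") auto
  have m2: "m < y" using mZ gy Mpos unfolding Z_def by (cases "m = y") auto
  show ?thesis
  proof (intro exI conjI allI impI)
    show "0 < x" "x < m" "m < y" using xy m1 m2 by auto
    fix p q assume pq: "x \<le> p" "p < m" "m < q" "q \<le> y"
    have gp: "g p < g u0"
    proof -
      have "g p \<le> g u0" using u0 pq m2 by auto
      moreover have "g p \<noteq> g u0"
      proof
        assume "g p = g u0"
        then have "p \<in> Z" unfolding Z_def using pq m2 by auto
        then have "m \<le> p" unfolding m_def using Zb by (simp add: cInf_lower)
        then show False using pq by simp
      qed
      ultimately show ?thesis by simp
    qed
    have gq: "g q \<le> g u0" using u0 pq m1 by auto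
    have gm: "g m = g u0" using mZ unfolding Z_def by simp
    have "(q - m) * g p + (m - p) * g q < g m * (q - p)"
    proof -
      have "(q - m) * g p < (q - m) * g u0" using gp pq by simp
      moreover have "(m - p) * g q \<le> (m - p) * g u0" using gq pq by simp
      ultimately show ?thesis using gm by (simp add: algebra_simps)
    qed
    then show "(q - m) * \<phi> p + (m - p) * \<phi> q < \<phi> m * (q - p)"
      using Laff[of q m p] unfolding g_def by (simp add: algebra_simps)
  qed
qed

lemma conv3:
  fixes g :: "real \<Rightarrow> real"
  assumes "convex_on S g" "p \<in> S" "q \<in> S" "p < m" "m < q"
  shows "g m * (q - p) \<le> (q - m) * g p + (m - p) * g q"
proof -
  define t where "t = (m - p) / (q - p)"
  have t: "0 \<le> t" "t \<le> 1" using assms unfolding t_def by auto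
  have tq: "t * (q - p) = m - p" unfolding t_def using assms by simp
  have mt: "m = (1 - t) *\<^sub>R p + t *\<^sub>R q" using tq by (simp add: algebra_simps)
  have "g m \<le> (1 - t) * g p + t * g q" using convex_onD[OF assms(1) t assms(2,3)] mt by simp
  then have "g m * (q - p) \<le> ((1 - t) * g p + t * g q) * (q - p)" using assms by simp
  also have "\<dots> = (q - p) * g p - (t * (q - p)) * g p + (t * (q - p)) * g q"
    by (simp add: algebra_simps)
  also have "\<dots> = (q - m) * g p + (m - p) * g q" unfolding tq by (simp add: algebra_simps)
  finally show ?thesis .
qed

theorem lemma3p3:
  fixes W :: "real^2^2 \<Rightarrow> real" and h f :: "real \<Rightarrow> real"
  assumes "rank_one_convex_GL2 W"
    and "isotropic_GL2 W"
    and "\<And>t. t > 0 \<Longrightarrow> h t = h (1 / t)"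
    and "\<And>F l1 l2. det F > 0 \<Longrightarrow> singular_values2 F l1 l2 \<Longrightarrow>
           W F = h (l1 / l2) + f (l1 * l2)"
  shows "convex_on {0<..} h \<or> convex_on {0<..} f"
proof -
  have R1: "W (s *\<^sub>R F1 + (1 - s) *\<^sub>R F2) \<le> s * W F1 + (1 - s) * W F2"
    if "rank (F1 - F2) = 1" "0 < s" "s < 1" "det F1 > 0" "det F2 > 0"
       "det (s *\<^sub>R F1 + (1 - s) *\<^sub>R F2) > 0" for F1 F2 s
  proof -
    have "W_ext W (s *\<^sub>R F1 + (1 - s) *\<^sub>R F2) \<le> ereal s * W_ext W F1 + ereal (1 - s) * W_ext W F2"
      using assms(1) that unfolding rank_one_convex_GL2_def by blast
    then show ?thesis using that unfolding W_ext_def by simp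
  qed
  have Wd: "W (mk x 0 0 b) = h (x / b) + f (x * b)" if "x > 0" "b > 0" for x b
    using assms(4)[of "mk x 0 0 b" x b] that by (simp add: det_mk sv_mk)
  have conv_d: "convex_on {0<..} (\<lambda>x. h (x / b) + f (x * b))" if b: "b > 0" for b
  proof (rule convex_on_linorderI)
    show "convex ({0<..}::real set)" by simp
    fix t x y :: real assume t: "0 < t" "t < 1" and xy: "x \<in> {0<..}" "y \<in> {0<..}" "x < y"
    have eq: "(1 - t) *\<^sub>R mk x 0 0 b + (1 - (1 - t)) *\<^sub>R mk y 0 0 b = mk ((1 - t) * x + t * y) 0 0 b"
      by (simp add: mat2_eq algebra_simps)
    have pos: "(1 - t) * x + t * y > 0" using t xy
      by (simp add: add_pos_pos)
    have rk: "rank (mk x 0 0 b - mk y 0 0 b) = 1" unfolding diff_mk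
      using xy by (intro rank1_mk) (auto simp: mat2_eq)
    have "W ((1 - t) *\<^sub>R mk x 0 0 b + (1 - (1 - t)) *\<^sub>R mk y 0 0 b)
       \<le> (1 - t) * W (mk x 0 0 b) + (1 - (1 - t)) * W (mk y 0 0 b)"
      by (rule R1[OF rk]) (use t xy b pos eq in \<open>simp_all add: det_mk\<close>)
    then show "h (((1 - t) *\<^sub>R x + t *\<^sub>R y) / b) + f (((1 - t) *\<^sub>R x + t *\<^sub>R y) * b)
      \<le> (1 - t) * (h (x / b) + f (x * b)) + t * (h (y / b) + f (y * b))"
      unfolding eq using Wd xy b pos by simp
  qed
  define \<sigma> where "\<sigma> t = W (mk 1 t 0 1)" for t
  have conv_s: "convex_on UNIV \<sigma>"
  proof (rule convex_on_linorderI)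
    show "convex (UNIV::real set)" by simp
    fix t x y :: real assume t: "0 < t" "t < 1" and xy: "x < y"
    have eq: "(1 - t) *\<^sub>R mk 1 x 0 1 + (1 - (1 - t)) *\<^sub>R mk 1 y 0 1 = mk 1 ((1 - t) * x + t * y) 0 1"
      by (simp add: mat2_eq algebra_simps)
    have rk: "rank (mk 1 x 0 1 - mk 1 y 0 1) = 1" unfolding diff_mk
      using xy by (intro rank1_mk) (auto simp: mat2_eq)
    have "W ((1 - t) *\<^sub>R mk 1 x 0 1 + (1 - (1 - t)) *\<^sub>R mk 1 y 0 1)
       \<le> (1 - t) * W (mk 1 x 0 1) + (1 - (1 - t)) * W (mk 1 y 0 1)"
      by (rule R1[OF rk]) (use t eq in \<open>simp_all add: det_mk\<close>)
    then show "\<sigma> ((1 - t) *\<^sub>R x + t *\<^sub>R y) \<le> (1 - t) * \<sigma> x + t * \<sigma> y"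
      unfolding eq \<sigma>_def by simp
  qed
  have Wsh: "\<sigma> (sqrt y - 1 / sqrt y) = h y + f 1" if y: "y > 0" for y
  proof -
    have sy: "sqrt y > 0" "sqrt y * sqrt y = y" using y by simp_all
    have sv: "singular_values2 (mk 1 (sqrt y - 1 / sqrt y) 0 1) (sqrt y) (1 / sqrt y)"
    proof (rule sv_mk)
      show "(sqrt y)\<^sup>2 + (1 / sqrt y)\<^sup>2 = 1\<^sup>2 + (sqrt y - 1 / sqrt y)\<^sup>2 + 0\<^sup>2 + 1\<^sup>2"
        using sy by (simp add: power2_eq_square field_simps)
      show "sqrt y * (1 / sqrt y) = 1 * 1 - (sqrt y - 1 / sqrt y) * 0" using sy by simp
    qed (use sy in auto)
    have "W (mk 1 (sqrt y - 1 / sqrt y) 0 1) = h (sqrt y / (1 / sqrt y)) + f (sqrt y * (1 / sqrt y))"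
      using assms(4)[OF _ sv] by (simp add: det_mk)
    then show ?thesis unfolding \<sigma>_def using sy by simp
  qed
  have cont_s: "continuous_on UNIV \<sigma>"
    using convex_on_continuous[OF open_UNIV conv_s] .
  have cont_h: "continuous_on {0<..} h"
  proof -
    have "continuous_on {0<..} (\<lambda>y. \<sigma> (sqrt y - 1 / sqrt y) - f 1)"
      by (intro continuous_intros continuous_on_compose2[OF cont_s]) auto
    then show ?thesis by (rule continuous_on_cong[THEN iffD1, rotated 2]) (auto simp: Wsh)
  qed
  have cont_f: "continuous_on {0<..} f"
  proof -
    have c1: "continuous_on {0<..} (\<lambda>x. h (x / 1) + f (x * 1))"
      by (rule convex_on_continuous[OF _ conv_d]) auto
    have "continuous_on {0<..} (\<lambda>x. (h (x / 1) + f (x * 1)) - h x)"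
      by (intro continuous_intros c1 cont_h)
    then show ?thesis by simp
  qed
  show ?thesis
  proof (rule ccontr)
    assume "\<not> (convex_on {0<..} h \<or> convex_on {0<..} f)"
    then have nh: "\<not> convex_on {0<..} h" and nf: "\<not> convex_on {0<..} f" by auto
    obtain m1 P1 Q1 where H: "0 < P1" "P1 < m1" "m1 < Q1"
      "\<And>p q. P1 \<le> p \<Longrightarrow> p < m1 \<Longrightarrow> m1 < q \<Longrightarrow> q \<le> Q1 \<Longrightarrow>
        (q - m1) * h p + (m1 - p) * h q < h m1 * (q - p)"
      using bad_triple[OF cont_h nh] by blast
    obtain m2 P2 Q2 where F: "0 < P2" "P2 < m2" "m2 < Q2"
      "\<And>p q. P2 \<le> p \<Longrightarrow> p < m2 \<Longrightarrow> m2 < q \<Longrightarrow> q \<le> Q2 \<Longrightarrow>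
        (q - m2) * f p + (m2 - p) * f q < f m2 * (q - p)"
      using bad_triple[OF cont_f nf] by blast
    define \<alpha> where "\<alpha> = min (m1 / P1) (m2 / P2)"
    define \<beta> where "\<beta> = min (Q1 / m1) (Q2 / m2)"
    have a1: "\<alpha> > 1" unfolding \<alpha>_def using H F by simp
    have b1: "\<beta> > 1" unfolding \<beta>_def using H F by simp
    define p1 where "p1 = m1 / \<alpha>"
    define q1 where "q1 = m1 * \<beta>"
    define k where "k = m2 / m1"
    have k: "k > 0" unfolding k_def using H F by simp
    have m2k: "m2 = k * m1" unfolding k_def using H by simp
    have hp1: "P1 \<le> p1" "p1 < m1" "m1 < q1" "q1 \<le> Q1"
    proof -
      have "\<alpha> \<le> m1 / P1" unfolding \<alpha>_def by simp
      then show "P1 \<le> p1" unfolding p1_def using H a1 by (simp add: field_simps)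
      show "p1 < m1" unfolding p1_def using H a1 by (simp add: field_simps)
      show "m1 < q1" unfolding q1_def using H b1 by simp
      have "\<beta> \<le> Q1 / m1" unfolding \<beta>_def by simp
      then show "q1 \<le> Q1" unfolding q1_def using H by (simp add: field_simps)
    qed
    have hp2: "P2 \<le> k * p1" "k * p1 < m2" "m2 < k * q1" "k * q1 \<le> Q2"
    proof -
      have kp: "k * p1 = m2 / \<alpha>" unfolding p1_def m2k by simp
      have kq: "k * q1 = m2 * \<beta>" unfolding q1_def m2k by simp
      have "\<alpha> \<le> m2 / P2" unfolding \<alpha>_def by simp
      then show "P2 \<le> k * p1" unfolding kp using F a1 by (simp add: field_simps)
      show "k * p1 < m2" unfolding kp using F a1 by (simp add: field_simps)
      show "m2 < k * q1" unfolding kq using F b1 by simp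
      have "\<beta> \<le> Q2 / m2" unfolding \<beta>_def by simp
      then show "k * q1 \<le> Q2" unfolding kq using F by (simp add: field_simps)
    qed
    have i1: "(q1 - m1) * h p1 + (m1 - p1) * h q1 < h m1 * (q1 - p1)"
      using H(4) hp1 by blast
    have "(k * q1 - m2) * f (k * p1) + (m2 - k * p1) * f (k * q1) < f m2 * (k * q1 - k * p1)"
      using F(4) hp2 by blast
    then have "k * ((q1 - m1) * f (k * p1) + (m1 - p1) * f (k * q1)) < k * (f (k * m1) * (q1 - p1))"
      unfolding m2k by (simp add: algebra_simps)
    then have i2: "(q1 - m1) * f (k * p1) + (m1 - p1) * f (k * q1) < f (k * m1) * (q1 - p1)"
      using k by simp
    define b where "b = sqrt k"
    have b: "b > 0" "b * b = k" unfolding b_def using k by simp_all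
    have ev: "h ((b * y) / b) + f ((b * y) * b) = h y + f (k * y)" for y
    proof -
      have "(b * y) * b = k * y" using b(2) by (simp add: algebra_simps)
      moreover have "(b * y) / b = y" using b(1) by simp
      ultimately show ?thesis by (simp only:)
    qed
    have p1pos: "p1 > 0" using hp1 H by simp
    have c3: "(\<lambda>x. h (x / b) + f (x * b)) (b * m1) * (b * q1 - b * p1) \<le>
        (b * q1 - b * m1) * (\<lambda>x. h (x / b) + f (x * b)) (b * p1)
        + (b * m1 - b * p1) * (\<lambda>x. h (x / b) + f (x * b)) (b * q1)"
      by (rule conv3[OF conv_d[OF b(1)]]) (use hp1 b p1pos in auto)
    have "b * ((h m1 + f (k * m1)) * (q1 - p1)) \<le>
        b * ((q1 - m1) * (h p1 + f (k * p1)) + (m1 - p1) * (h q1 + f (k * q1)))"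
      using c3 unfolding ev by (simp add: algebra_simps)
    then have i3: "(h m1 + f (k * m1)) * (q1 - p1) \<le>
        (q1 - m1) * (h p1 + f (k * p1)) + (m1 - p1) * (h q1 + f (k * q1))"
      using b by simp
    show False using i1 i2 i3 by (simp add: algebra_simps)
  qed
qed

end
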